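(* Let $\vec{s}(x,y)=(x,y,\zeta(x,y))^{\mathsf T}$ be a smooth Monge-patch parametrization of a surface over the image plane, and fix an image point at which the slant satisfies $0\le\sigma<\pi/2$. Let $\mathcal{D}\vec{s}=U\Sigma V^{\mathsf T}$ be the singular value decomposition of the $3\times 2$ Jacobian $\mathcal{D}\vec{s}$, where $U$ is $3\times 2$ with orthonormal columns spanning the tangent plane (first column: the unit tangent vector in the direction of maximal slant, i.e. the tilt direction lifted to the surface), $\Sigma=\begin{pmatrix}\frac{1}{\cos\sigma}&0\\0&1\end{pmatrix}$, and $V$ is the $2\times 2$ rotation matrix by the tilt angle $\tau$ (its first column is the tilt direction in the image). Let $W$ be the $2\times 2$ orthogonal matrix whose columns are the principal directions expressed in the orthonormal tangent-plane basis given by the columns of $U$, and $K=\operatorname{diag}(\kappa_1,\kappa_2)$ the diagonal matrix of the corresponding principal curvatures, with $\kappa_1\kappa_2\neq 0$. Then the $3\times 2$ Jacobian $\mathcal{D}\vec{n}$ of the unit normal field $\vec{n}$ (as a function of image position) and its Moore–Penrose pseudo-inverse satisfy $$\mathcal{D}\vec{n}=U W K W^{\mathsf T}\Sigma V^{\mathsf T},\qquad \mathcal{D}\vec{n}^{+}=V\Sigma^{-1}WK^{-1}W^{\mathsf T}U^{\mathsf T}.$$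
   Context: The unit normal is $\vec{n}(x,y)=\frac{\vec{s}_x\times\vec{s}_y}{\|\vec{s}_x\times\vec{s}_y\|}$, viewed as a map from the image plane to the unit sphere; $\mathcal{D}\vec{n}$ is its $3\times2$ Jacobian with respect to image coordinates $(x,y)$. The Gauss map $\tilde{\vec{n}}$ sends a surface point to its unit normal; its differential $\mathcal{D}\tilde{\vec{n}}$ (shape operator) is a self-adjoint linear map of the tangent plane; the principal curvatures $\kappa_1,\kappa_2$ are its eigenvalues and the principal directions are its orthonormal eigenvectors. Slant $\sigma$ is the angle between the surface normal and the viewing ($z$) axis; tilt $\tau$ is the image direction of the gradient of $\zeta$. $A^{+}$ denotes the Moore–Penrose pseudo-inverse. *)

theory Defs
  imports "HOL-Analysis.Analysis"
begin

definition partial_deriv :: "2 \<Rightarrow> (real^2 \<Rightarrow> real) \<Rightarrow> real^2 \<Rightarrow> real" where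
  "partial_deriv i f x = deriv (\<lambda>t. f (x + t *\<^sub>R axis i 1)) 0"

definition smooth_on :: "(real^2) set \<Rightarrow> (real^2 \<Rightarrow> real) \<Rightarrow> bool" where
  "smooth_on S f \<longleftrightarrow>
     (\<forall>js. continuous_on S (foldr partial_deriv js f) \<and>
        (\<forall>x\<in>S. \<forall>i. (\<lambda>t. foldr partial_deriv js f (x + t *\<^sub>R axis i 1)) differentiable (at 0)))"

definition monge :: "(real^2 \<Rightarrow> real) \<Rightarrow> real^2 \<Rightarrow> real^3" where
  "monge \<zeta> p = vector [p$1, p$2, \<zeta> p]"

definition Ds :: "(real^2 \<Rightarrow> real) \<Rightarrow> real^2 \<Rightarrow> real^2^3" where
  "Ds \<zeta> p = matrix (frechet_derivative (monge \<zeta>) (at p))"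

definition unit_normal :: "(real^2 \<Rightarrow> real) \<Rightarrow> real^2 \<Rightarrow> real^3" where
  "unit_normal \<zeta> p =
     (let c = cross3 (column 1 (Ds \<zeta> p)) (column 2 (Ds \<zeta> p)) in (1 / norm c) *\<^sub>R c)"

definition Dn :: "(real^2 \<Rightarrow> real) \<Rightarrow> real^2 \<Rightarrow> real^2^3" where
  "Dn \<zeta> p = matrix (frechet_derivative (unit_normal \<zeta>) (at p))"

text \<open>Shape operator: the differential of the Gauss map acting on tangent vectors;
  by the chain rule it sends the tangent vector Ds v to Dn v.\<close>
definition shape_op :: "(real^2 \<Rightarrow> real) \<Rightarrow> real^2 \<Rightarrow> real^3 \<Rightarrow> real^3" where
  "shape_op \<zeta> p e = Dn \<zeta> p *v (THE v. Ds \<zeta> p *v v = e)"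

definition slant :: "(real^2 \<Rightarrow> real) \<Rightarrow> real^2 \<Rightarrow> real" where
  "slant \<zeta> p = arccos (unit_normal \<zeta> p \<bullet> axis 3 1)"

definition img_grad :: "(real^2 \<Rightarrow> real) \<Rightarrow> real^2 \<Rightarrow> real^2" where
  "img_grad \<zeta> p = (\<chi> i. frechet_derivative \<zeta> (at p) (axis i 1))"

text \<open>tau is a tilt angle at p: (cos tau, sin tau) is the image direction of the gradient
  (any tau if the gradient vanishes).\<close>
definition is_tilt :: "(real^2 \<Rightarrow> real) \<Rightarrow> real^2 \<Rightarrow> real \<Rightarrow> bool" where
  "is_tilt \<zeta> p \<tau> \<longleftrightarrow> img_grad \<zeta> p = norm (img_grad \<zeta> p) *\<^sub>R vector [cos \<tau>, sin \<tau>]"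

definition rot2 :: "real \<Rightarrow> real^2^2" where
  "rot2 \<tau> = vector [vector [cos \<tau>, - sin \<tau>], vector [sin \<tau>, cos \<tau>]]"

definition diag2 :: "real \<Rightarrow> real \<Rightarrow> real^2^2" where
  "diag2 a b = vector [vector [a, 0], vector [0, b]]"

definition mp_pinv :: "real^'n^'m \<Rightarrow> real^'m^'n" where
  "mp_pinv A = (THE X. A ** X ** A = A \<and> X ** A ** X = X \<and>
                       transpose (A ** X) = A ** X \<and> transpose (X ** A) = X ** A)"

end

theory Submission
  imports Defs
begin

lemma diag2_mul: "diag2 a b ** diag2 c d = diag2 (a*c) (b*d)"
  by (simp add: diag2_def matrix_matrix_mult_def vec_eq_iff forall_2 sum_2)

lemma diag2_one: "diag2 1 1 = mat 1"
  by (simp add: diag2_def mat_def vec_eq_iff forall_2)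

lemma matrix_inv_unique:
  fixes A :: "real^'n^'m"
  assumes "A ** B = mat 1" "B ** A = mat 1"
  shows "matrix_inv A = B"
proof -
  have ex: "\<exists>A'. A ** A' = mat 1 \<and> A' ** A = mat 1" using assms by blast
  let ?C = "matrix_inv A"
  have C: "A ** ?C = mat 1 \<and> ?C ** A = mat 1"
    unfolding matrix_inv_def by (rule someI_ex[OF ex])
  have "?C = ?C ** (A ** B)" using assms by simp
  also have "\<dots> = (?C ** A) ** B" by (simp add: matrix_mul_assoc)
  also have "\<dots> = B" using C by simp
  finally show ?thesis .
qed

lemma matrix_inv_diag2:
  assumes "a \<noteq> 0" "b \<noteq> 0"
  shows "matrix_inv (diag2 a b) = diag2 (1/a) (1/b)"
  by (rule matrix_inv_unique) (use assms in \<open>simp_all add: diag2_mul diag2_one\<close>)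

lemma rot2_orth: "transpose (rot2 t) ** rot2 t = mat 1" "rot2 t ** transpose (rot2 t) = mat 1"
  by (simp_all add: rot2_def transpose_def matrix_matrix_mult_def mat_def vec_eq_iff forall_2 sum_2 power2_eq_square[symmetric])

lemma column_mul: "column j (A ** B) = A *v column j B"
  by (simp add: column_def matrix_matrix_mult_def matrix_vector_mult_def vec_eq_iff)

lemma matrix_eq_columns: "(\<And>j. column j A = column j B) \<Longrightarrow> A = B"
  by (simp add: column_def vec_eq_iff)

lemma column_diag2: "column 1 (diag2 a b) = a *\<^sub>R axis 1 1" "column 2 (diag2 a b) = b *\<^sub>R axis 2 1"
  by (simp_all add: column_def diag2_def vec_eq_iff forall_2 axis_def)

lemma mpv_axis: "(A::real^'n^'m) *v (c *\<^sub>R axis j 1) = c *\<^sub>R column j A"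
  by (simp add: matrix_vector_mult_def column_def axis_def vec_eq_iff if_distrib cong: if_cong)

lemma penrose_unique:
  fixes A :: "real^'n^'m"
  assumes "A ** X ** A = A" "X ** A ** X = X" "transpose (A ** X) = A ** X" "transpose (X ** A) = X ** A"
      and "A ** Y ** A = A" "Y ** A ** Y = Y" "transpose (A ** Y) = A ** Y" "transpose (Y ** A) = Y ** A"
  shows "X = Y"
proof -
  have AX: "A ** X = A ** Y" 
  proof -
    have "A ** X = transpose (A ** X)" using assms by simp
    also have "\<dots> = transpose X ** transpose A" by (simp add: matrix_transpose_mul)
    also have "\<dots> = transpose X ** transpose (A ** Y ** A)" using assms by simp
    also have "\<dots> = transpose X ** (transpose A ** transpose Y ** transpose A)" by (simp add: matrix_transpose_mul matrix_mul_assoc)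
    also have "\<dots> = transpose (A ** X) ** transpose (A ** Y)" by (simp add: matrix_transpose_mul matrix_mul_assoc)
    also have "\<dots> = A ** X ** A ** Y" using assms by (simp add: matrix_mul_assoc)
    also have "\<dots> = A ** Y" using assms by simp
    finally show ?thesis .
  qed
  have XA: "X ** A = Y ** A"
  proof -
    have "X ** A = transpose (X ** A)" using assms by simp
    also have "\<dots> = transpose A ** transpose X" by (simp add: matrix_transpose_mul)
    also have "\<dots> = transpose (A ** Y ** A) ** transpose X" using assms by simp
    also have "\<dots> = transpose A ** transpose Y ** transpose A ** transpose X" by (simp add: matrix_transpose_mul matrix_mul_assoc)
    also have "\<dots> = transpose (Y ** A) ** transpose (X ** A)" by (simp add: matrix_transpose_mul matrix_mul_assoc)
    also have "\<dots> = Y ** A ** X ** A" using assms by (simp add: matrix_mul_assoc)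
    also have "\<dots> = Y ** A" using assms(1) by (metis matrix_mul_assoc)
    finally show ?thesis .
  qed
  have "X = X ** A ** X" using assms by simp
  also have "\<dots> = X ** (A ** Y)" using AX by (metis matrix_mul_assoc)
  also have "\<dots> = Y ** A ** Y" using XA by (metis matrix_mul_assoc)
  also have "\<dots> = Y" using assms by simp
  finally show ?thesis .
qed

lemma mul_cancel_r: "(A::real^'n^'m) ** B = mat 1 \<Longrightarrow> A ** (B ** C) = C"
  by (metis matrix_mul_assoc matrix_mul_lid)

theorem mainTheorem1:
  fixes \<zeta> :: "real^2 \<Rightarrow> real" and S :: "(real^2) set" and p :: "real^2"
    and \<sigma> \<tau> \<kappa>1 \<kappa>2 :: real and U :: "real^2^3" and W V \<Sigma> K :: "real^2^2"
  assumes "open S" and "p \<in> S" and "smooth_on S \<zeta>"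
    and "\<sigma> = slant \<zeta> p" and "0 \<le> \<sigma>" and "\<sigma> < pi / 2"
    and "is_tilt \<zeta> p \<tau>" and "V = rot2 \<tau>"
    and "\<Sigma> = diag2 (1 / cos \<sigma>) 1"
    and "transpose U ** U = mat 1"
    and "Ds \<zeta> p = U ** \<Sigma> ** transpose V"
    and "orthogonal_matrix W"
    and "K = diag2 \<kappa>1 \<kappa>2"
    and "shape_op \<zeta> p (U *v column 1 W) = \<kappa>1 *\<^sub>R (U *v column 1 W)"
    and "shape_op \<zeta> p (U *v column 2 W) = \<kappa>2 *\<^sub>R (U *v column 2 W)"
    and "\<kappa>1 * \<kappa>2 \<noteq> 0"
  shows "Dn \<zeta> p = U ** W ** K ** transpose W ** \<Sigma> ** transpose V \<and>
         mp_pinv (Dn \<zeta> p) = V ** matrix_inv \<Sigma> ** W ** matrix_inv K ** transpose W ** transpose U"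
proof -
  define c where "c = cos \<sigma>"
  have c0: "c > 0" unfolding c_def using assms(5,6) by (intro cos_gt_zero_pi) auto
  have k1: "\<kappa>1 \<noteq> 0" and k2: "\<kappa>2 \<noteq> 0" using assms(16) by auto
  define Si where "Si = diag2 c 1"
  define Ki where "Ki = diag2 (1/\<kappa>1) (1/\<kappa>2)"
  have Si: "matrix_inv \<Sigma> = Si" unfolding Si_def assms(9) c_def[symmetric]
    using c0 by (simp add: matrix_inv_diag2)
  have Ki: "matrix_inv K = Ki" unfolding Ki_def assms(13) using k1 k2 by (simp add: matrix_inv_diag2)
  have SSi: "\<Sigma> ** Si = mat 1" "Si ** \<Sigma> = mat 1"
    unfolding Si_def assms(9) c_def[symmetric] using c0 by (simp_all add: diag2_mul diag2_one)
  have KKi: "K ** Ki = mat 1" "Ki ** K = mat 1"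
    unfolding Ki_def assms(13) using k1 k2 by (simp_all add: diag2_mul diag2_one)
  have VV: "transpose V ** V = mat 1" "V ** transpose V = mat 1" unfolding assms(8) by (simp_all add: rot2_orth)
  have WW: "transpose W ** W = mat 1" "W ** transpose W = mat 1"
    using assms(12) by (simp_all add: orthogonal_matrix_def)
  note UU = assms(10)
  note canc = mul_cancel_r[OF SSi(1)] mul_cancel_r[OF SSi(2)] mul_cancel_r[OF KKi(1)] mul_cancel_r[OF KKi(2)]
     mul_cancel_r[OF VV(1)] mul_cancel_r[OF VV(2)] mul_cancel_r[OF WW(1)] mul_cancel_r[OF WW(2)]
     mul_cancel_r[OF UU] SSi KKi VV WW UU
  define B where "B = V ** Si"
  have DsB: "Ds \<zeta> p ** B = U" unfolding B_def assms(11) by (simp add: matrix_mul_assoc[symmetric] canc)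
  define L where "L = V ** Si ** transpose U"
  have LDs: "L ** Ds \<zeta> p = mat 1" unfolding L_def assms(11) by (simp add: matrix_mul_assoc[symmetric] canc)
  have THE: "(THE v. Ds \<zeta> p *v v = U *v w) = B *v w" for w
  proof (rule the_equality)
    show "Ds \<zeta> p *v (B *v w) = U *v w" by (simp add: matrix_vector_mul_assoc DsB)
  next
    fix v assume "Ds \<zeta> p *v v = U *v w"
    hence "L *v (Ds \<zeta> p *v v) = L *v (Ds \<zeta> p *v (B *v w))" by (simp add: matrix_vector_mul_assoc DsB)
    thus "v = B *v w" by (simp add: matrix_vector_mul_assoc LDs DsB[symmetric] matrix_mul_assoc)
  qed
  have ev1: "Dn \<zeta> p *v (B *v column 1 W) = \<kappa>1 *\<^sub>R (U *v column 1 W)"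
    using assms(14) by (simp add: shape_op_def THE)
  have ev2: "Dn \<zeta> p *v (B *v column 2 W) = \<kappa>2 *\<^sub>R (U *v column 2 W)"
    using assms(15) by (simp add: shape_op_def THE)
  have key: "Dn \<zeta> p ** (B ** W) = U ** W ** K"
  proof (rule matrix_eq_columns)
    fix j :: 2
    show "column j (Dn \<zeta> p ** (B ** W)) = column j (U ** W ** K)"
      using exhaust_2[of j]
      by (auto simp: column_mul matrix_vector_mul_assoc[symmetric] ev1 ev2 assms(13) column_diag2 mpv_axis mpv_axis[where c=1, simplified]
                     matrix_vector_mult_scaleR)
  qed
  have Dn: "Dn \<zeta> p = U ** W ** K ** transpose W ** \<Sigma> ** transpose V"
  proof -
    have "B ** W ** (transpose W ** \<Sigma> ** transpose V) = mat 1"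
      unfolding B_def by (simp add: matrix_mul_assoc[symmetric] canc)
    hence "Dn \<zeta> p = Dn \<zeta> p ** (B ** W) ** (transpose W ** \<Sigma> ** transpose V)"
      by (simp add: matrix_mul_assoc[symmetric])
    thus ?thesis unfolding key by (simp add: matrix_mul_assoc)
  qed
  define M where "M = W ** K ** transpose W ** \<Sigma> ** transpose V"
  define Mi where "Mi = V ** Si ** W ** Ki ** transpose W"
  have MMi: "M ** Mi = mat 1" "Mi ** M = mat 1"
    unfolding M_def Mi_def by (simp_all add: matrix_mul_assoc[symmetric] canc)
  have A: "Dn \<zeta> p = U ** M" unfolding Dn M_def by (simp add: matrix_mul_assoc)
  define X where "X = Mi ** transpose U"
  have AX: "Dn \<zeta> p ** X = U ** transpose U" unfolding A X_def
    by (simp add: matrix_mul_assoc[symmetric] mul_cancel_r[OF MMi(1)])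
  have XA: "X ** Dn \<zeta> p = mat 1" unfolding A X_def
    by (simp add: matrix_mul_assoc[symmetric] mul_cancel_r[OF UU] MMi)
  have P1: "Dn \<zeta> p ** X ** Dn \<zeta> p = Dn \<zeta> p" by (simp add: matrix_mul_assoc[symmetric] XA)
  have P2: "X ** Dn \<zeta> p ** X = X" by (simp add: XA)
  have P3: "transpose (Dn \<zeta> p ** X) = Dn \<zeta> p ** X" unfolding AX by (simp add: matrix_transpose_mul)
  have P4: "transpose (X ** Dn \<zeta> p) = X ** Dn \<zeta> p" unfolding XA by simp
  have pinv: "mp_pinv (Dn \<zeta> p) = X"
    unfolding mp_pinv_def
  proof (rule the_equality)
    show "Dn \<zeta> p ** X ** Dn \<zeta> p = Dn \<zeta> p \<and> X ** Dn \<zeta> p ** X = X \<and>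
      transpose (Dn \<zeta> p ** X) = Dn \<zeta> p ** X \<and> transpose (X ** Dn \<zeta> p) = X ** Dn \<zeta> p"
      using P1 P2 P3 P4 by blast
  next
    fix Y assume "Dn \<zeta> p ** Y ** Dn \<zeta> p = Dn \<zeta> p \<and> Y ** Dn \<zeta> p ** Y = Y \<and>
      transpose (Dn \<zeta> p ** Y) = Dn \<zeta> p ** Y \<and> transpose (Y ** Dn \<zeta> p) = Y ** Dn \<zeta> p"
    thus "Y = X" using penrose_unique[OF P1 P2 P3 P4] by blast
  qed
  show ?thesis using Dn pinv unfolding X_def Mi_def Si Ki by (simp add: matrix_mul_assoc)
qed

end
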